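(* Let $F$ be a distribution function on $[0,1]$ with a positive, non-increasing, differentiable density $g$ and non-decreasing hazard ratio $g(x)/(1-F(x))$. Let $\{f_{i,j}\}$, $f_{i,j}=f_{j,i}$ ($1\le i\le j\le n$), be independent with distribution $F$. For $I\subseteq[n]$ with $|I|=r$, let $\mathcal D_I$ be the event that $f_{i,j}\ge (f_{i,i}+f_{j,j})/2$ for all distinct $i,j\in I$ and no subset $J\subsetneq I$ with $|J|\ge2$ supports a non-trivial local equilibrium, where $J$ supports a non-trivial local equilibrium if there exist $p_j>0$ ($j\in J$), $\sum_{j\in J}p_j=1$, such that $\sum_{j\in J}f_{i,j}p_j$ is constant in $i\in J$ and $\sum_{i,j\in J}f_{i,j}x_ix_j\le0$ whenever $\sum_{i\in J}x_i=0$. Then there exist constants $\eta_1^*,\eta_2^*$ such that \[ \mathrm{P}(\mathcal D_I)\le 2^{-\frac32 r^2}\exp\bigl(\eta_1^*r\log r+\eta_2^*r+O(\log r)\bigr). \] *)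

theory Defs
  imports "HOL-Probability.Probability"
begin

definition pairs :: "nat \<Rightarrow> (nat \<times> nat) set" where
  "pairs n = {(i, j). 1 \<le> i \<and> i \<le> j \<and> j \<le> n}"

definition dist_meas :: "(real \<Rightarrow> real) \<Rightarrow> real measure" where
  "dist_meas g = density lborel (\<lambda>x. ennreal (indicator {0..1} x * g x))"

definition cdf :: "(real \<Rightarrow> real) \<Rightarrow> real \<Rightarrow> real" where
  "cdf g x = integral {0..x} g"

definition sym_entry :: "(nat \<times> nat \<Rightarrow> real) \<Rightarrow> nat \<Rightarrow> nat \<Rightarrow> real" where
  "sym_entry \<omega> i j = \<omega> (min i j, max i j)"

definition supports_local_eq :: "(nat \<Rightarrow> nat \<Rightarrow> real) \<Rightarrow> nat set \<Rightarrow> bool" where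
  "supports_local_eq f J \<longleftrightarrow>
     (\<exists>p :: nat \<Rightarrow> real. (\<forall>j\<in>J. p j > 0) \<and> (\<Sum>j\<in>J. p j) = 1 \<and>
        (\<exists>c. \<forall>i\<in>J. (\<Sum>j\<in>J. f i j * p j) = c) \<and>
        (\<forall>x :: nat \<Rightarrow> real. (\<Sum>i\<in>J. x i) = 0 \<longrightarrow>
            (\<Sum>i\<in>J. \<Sum>j\<in>J. f i j * x i * x j) \<le> 0))"

definition event_D :: "(nat \<Rightarrow> nat \<Rightarrow> real) \<Rightarrow> nat set \<Rightarrow> bool" where
  "event_D f I \<longleftrightarrow>
     (\<forall>i\<in>I. \<forall>j\<in>I. i \<noteq> j \<longrightarrow> f i j \<ge> (f i i + f j j) / 2) \<and>
     \<not> (\<exists>J. J \<subset> I \<and> card J \<ge> 2 \<and> supports_local_eq f J)"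

end

theory Submission
  imports Defs "HOL-Computational_Algebra.Polynomial"
begin



fun sch :: "nat \<Rightarrow> real poly" where
  "sch 0 = 1"
| "sch (Suc 0) = [:-1, 2:]"
| "sch (Suc (Suc n)) = smult 2 ([:-1, 2:] * sch (Suc n)) - sch n"

lemma cheb_aux: "2 * ((-1 + 2 * ((1 + cos t) / 2)) * cos (y::real)) - cos (y - t) = cos (y + t)"
  by (simp add: cos_add cos_diff algebra_simps)

lemma sch_cos: "poly (sch n) ((1 + cos t) / 2) = cos (real n * t)"
proof (induction n rule: sch.induct)
  case 1 then show ?case by simp
next
  case 2 then show ?case by (simp add: field_simps)
next
  case (3 n)
  have a: "cos (real (Suc (Suc n)) * t) = cos (real (Suc n) * t + t)"
    by (simp add: distrib_right)
  have b: "cos (real n * t) = cos (real (Suc n) * t - t)"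
    by (simp add: distrib_right)
  have IH: "poly (sch (Suc n)) ((1 + cos t) / 2) = cos (real (Suc n) * t)" using 3 by simp
  have "poly (sch (Suc (Suc n))) ((1 + cos t) / 2)
        = 2 * ((-1 + 2 * ((1 + cos t) / 2)) * cos (real (Suc n) * t)) - cos (real (Suc n) * t - t)"
    using 3 b by (simp add: IH field_simps)
  also have "\<dots> = cos (real (Suc n) * t + t)"
    using cheb_aux[of t "real (Suc n) * t"] by simp
  finally show ?case using a by simp
qed

lemma sch_bound:
  assumes "0 \<le> x" "x \<le> 1"
  shows "\<bar>poly (sch n) x\<bar> \<le> 1"
proof -
  have "x = (1 + cos (arccos (2*x - 1))) / 2"
    using assms by (simp add: cos_arccos)
  then have "poly (sch n) x = cos (real n * arccos (2*x - 1))"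
    by (metis sch_cos)
  then show ?thesis by simp
qed

lemma sch_deg_coeff:
  "degree (sch n) \<le> n \<and> coeff (sch n) n = (if n = 0 then 1 else 2 ^ (2*n - 1))"
proof (induction n rule: sch.induct)
  case 1 then show ?case by simp
next
  case 2 then show ?case by simp
next
  case (3 n)
  let ?p = "sch (Suc n)"
  have dp: "degree ?p \<le> Suc n" and cp: "coeff ?p (Suc n) = 2 ^ (2 * Suc n - 1)"
    using 3 by auto
  have dq: "degree (sch n) \<le> n" using 3 by auto
  have e: "[:-1, 2:] * ?p = smult (-1) ?p + pCons 0 (smult 2 ?p)"
    by (simp add: mult_pCons_left)
  have d1: "degree ([:-1, 2:] * ?p) \<le> Suc (Suc n)"
    using degree_mult_le[of "[:-1, 2:]" ?p] dp by simp
  have D: "degree (sch (Suc (Suc n))) \<le> Suc (Suc n)"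
    using d1 dq degree_diff_le[of "smult 2 ([:-1, 2:] * ?p)" "Suc (Suc n)" "sch n"]
    by (simp add: degree_smult_le le_trans)
  have c0: "coeff ?p (Suc (Suc n)) = 0" using dp by (simp add: coeff_eq_0)
  have c1: "coeff (sch n) (Suc (Suc n)) = 0" using dq by (simp add: coeff_eq_0)
  have "coeff (sch (Suc (Suc n))) (Suc (Suc n)) = 2 * (2 * 2 ^ (2 * Suc n - 1))"
    using c0 c1 cp by (simp add: e)
  also have "\<dots> = 2 ^ (2 * Suc (Suc n) - 1)"
    by (simp add: power_add[symmetric])
  finally have "coeff (sch (Suc (Suc n))) (Suc (Suc n)) = 2 ^ (2 * Suc (Suc n) - 1)" .
  then show ?case using D by simp
qed

lemma interp_coeff:
  fixes u :: "nat \<Rightarrow> real" and P :: "real poly"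
  assumes fin: "finite K" and inj: "inj_on u K" and cK: "card K = Suc m" and dP: "degree P \<le> m"
  shows "coeff P m = (\<Sum>k\<in>K. poly P (u k) / (\<Prod>j\<in>K-{k}. (u k - u j)))"
proof -
  define D where "D k = (\<Prod>j\<in>K-{k}. (u k - u j))" for k
  define B where "B k = (\<Prod>j\<in>K-{k}. [:- u j, 1:])" for k
  define L where "L = (\<Sum>k\<in>K. smult (poly P (u k) / D k) (B k))"
  have Dnz: "D k \<noteq> 0" if "k \<in> K" for k
    unfolding D_def using fin inj that by (auto simp: inj_on_def)
  have cardB: "card (K - {k}) = m" if "k \<in> K" for k using cK that fin by simp
  have degB: "degree (B k) = m" if "k \<in> K" for k
  proof -
    have "degree (B k) = (\<Sum>j\<in>K-{k}. degree [:- u j, 1:])"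
      unfolding B_def by (rule degree_prod_eq_sum_degree) auto
    also have "\<dots> = m" using cardB[OF that] by simp
    finally show ?thesis .
  qed
  have lcB: "coeff (B k) m = 1" if "k \<in> K" for k
  proof -
    have "lead_coeff (B k) = 1" unfolding B_def lead_coeff_prod by simp
    then show ?thesis using degB[OF that] by simp
  qed
  have degL: "degree L \<le> m"
    unfolding L_def
  proof (rule degree_sum_le)
    fix k assume "k \<in> K"
    then show "degree (smult (poly P (u k) / D k) (B k)) \<le> m"
      using degB degree_smult_le[of "poly P (u k) / D k" "B k"] by simp
  qed (use fin in simp)
  have polyB: "poly (B k) x = (\<Prod>j\<in>K-{k}. (x - u j))" for k x
    unfolding B_def by (simp add: poly_prod)
  have evalL: "poly L (u i) = poly P (u i)" if i: "i \<in> K" for i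
  proof -
    have "poly L (u i) = (\<Sum>k\<in>K. poly P (u k) / D k * poly (B k) (u i))"
      unfolding L_def by (simp add: poly_sum)
    also have "\<dots> = poly P (u i) / D i * poly (B i) (u i)"
    proof (rule sum.remove[OF fin i, THEN trans], rule trans[of _ "_ + 0"], rule arg_cong2[where f="(+)"])
      show "(\<Sum>k\<in>K - {i}. poly P (u k) / D k * poly (B k) (u i)) = 0"
      proof (rule sum.neutral, intro ballI)
        fix k assume "k \<in> K - {i}"
        then have "poly (B k) (u i) = 0" unfolding polyB using fin i
          by (auto simp: prod_zero_iff)
        then show "poly P (u k) / D k * poly (B k) (u i) = 0" by simp
      qed
    qed simp_all
    also have "\<dots> = poly P (u i)"
      using Dnz[OF i] by (simp add: polyB D_def)
    finally show ?thesis .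
  qed
  have "P = L"
  proof (rule ccontr)
    assume ne: "P \<noteq> L"
    then have "P - L \<noteq> 0" by simp
    then have c1: "card {x. poly (P - L) x = 0} \<le> degree (P - L)"
      by (rule card_poly_roots_bound)
    have "degree (P - L) \<le> m" using degL dP degree_diff_le by blast
    moreover have "u ` K \<subseteq> {x. poly (P - L) x = 0}" using evalL by auto
    then have "card (u ` K) \<le> card {x. poly (P - L) x = 0}"
      using \<open>P - L \<noteq> 0\<close> by (intro card_mono poly_roots_finite) auto
    moreover have "card (u ` K) = Suc m" using card_image[OF inj] cK by simp
    ultimately show False using c1 by linarith
  qed
  then have "coeff P m = coeff L m" by simp
  also have "\<dots> = (\<Sum>k\<in>K. poly P (u k) / D k * coeff (B k) m)"
    by (simp add: L_def coeff_sum)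
  also have "\<dots> = (\<Sum>k\<in>K. poly P (u k) / D k)"
    by (rule sum.cong) (simp_all add: lcB)
  finally show ?thesis by (simp add: D_def)
qed

lemma exists_small:
  fixes u :: "nat \<Rightarrow> real"
  assumes fin: "finite K" and inj: "inj_on u K" and cK: "card K = Suc m"
    and range: "u ` K \<subseteq> {0..1}"
  shows "\<exists>k\<in>K. \<bar>\<Prod>j\<in>K-{k}. (u k - u j)\<bar> \<le> real (Suc m) * 2 / 4 ^ m"
proof (rule ccontr)
  assume "\<not> ?thesis"
  then have big: "\<bar>\<Prod>j\<in>K-{k}. (u k - u j)\<bar> > real (Suc m) * 2 / 4 ^ m" if "k \<in> K" for k
    using that by force
  define c where "c = coeff (sch m) m"
  have c_ge: "c \<ge> 4 ^ m / 2"
  proof (cases m)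
    case 0 then show ?thesis by (simp add: c_def)
  next
    case (Suc m')
    then have "c = 2 ^ (2*m - 1)" using sch_deg_coeff[of m] by (simp add: c_def)
    also have "\<dots> = 4 ^ m / 2" using Suc by (simp add: power_mult)
    finally show ?thesis by simp
  qed
  have "c = (\<Sum>k\<in>K. poly (sch m) (u k) / (\<Prod>j\<in>K-{k}. (u k - u j)))"
    unfolding c_def by (rule interp_coeff[OF fin inj cK]) (use sch_deg_coeff in blast)
  also have "\<dots> \<le> (\<Sum>k\<in>K. 1 / \<bar>\<Prod>j\<in>K-{k}. (u k - u j)\<bar>)"
  proof (rule sum_mono)
    fix k assume k: "k \<in> K"
    have "\<bar>poly (sch m) (u k)\<bar> \<le> 1" using range k by (intro sch_bound) auto
    then have "poly (sch m) (u k) / (\<Prod>j\<in>K-{k}. (u k - u j))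
          \<le> \<bar>poly (sch m) (u k)\<bar> / \<bar>\<Prod>j\<in>K-{k}. (u k - u j)\<bar>"
      by (metis abs_divide abs_ge_self)
    also have "\<dots> \<le> 1 / \<bar>\<Prod>j\<in>K-{k}. (u k - u j)\<bar>"
      using \<open>\<bar>poly (sch m) (u k)\<bar> \<le> 1\<close> by (simp add: divide_right_mono)
    finally show "poly (sch m) (u k) / (\<Prod>j\<in>K-{k}. (u k - u j)) \<le> 1 / \<bar>\<Prod>j\<in>K-{k}. (u k - u j)\<bar>" .
  qed
  also have "\<dots> < (\<Sum>k\<in>K. 4 ^ m / (real (Suc m) * 2))"
  proof (rule sum_strict_mono[OF fin])
    show "K \<noteq> {}" using cK by auto
    fix k assume k: "k \<in> K"
    have pos: "0 < real (Suc m) * 2 / 4 ^ m" by simp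
    have "1 / \<bar>\<Prod>j\<in>K-{k}. (u k - u j)\<bar> < 1 / (real (Suc m) * 2 / 4 ^ m)"
    proof (rule divide_strict_left_mono[OF big[OF k]])
      have "0 < \<bar>\<Prod>j\<in>K-{k}. (u k - u j)\<bar>" using big[OF k] pos by linarith
      then show "0 < \<bar>\<Prod>j\<in>K-{k}. (u k - u j)\<bar> * (real (Suc m) * 2 / 4 ^ m)"
        using pos by (rule mult_pos_pos)
    qed simp
    then show "1 / \<bar>\<Prod>j\<in>K-{k}. (u k - u j)\<bar> < 4 ^ m / (real (Suc m) * 2)" by simp
  qed
  also have "\<dots> = real (Suc m) * (4 ^ m / (real (Suc m) * 2))" using cK by simp
  also have "\<dots> = 4 ^ m / 2" by (simp del: of_nat_Suc)
  finally show False using c_ge by simp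
qed

definition opairs :: "nat set \<Rightarrow> (nat \<times> nat) set" where
  "opairs K = {p. fst p \<in> K \<and> snd p \<in> K \<and> fst p < snd p}"

lemma finite_opairs: "finite K \<Longrightarrow> finite (opairs K)"
  by (rule finite_subset[of _ "K \<times> K"]) (auto simp: opairs_def)

lemma vdm:
  fixes u :: "nat \<Rightarrow> real"
  assumes "finite K" "u ` K \<subseteq> {0..1}"
  shows "(\<Prod>p\<in>opairs K. \<bar>u (fst p) - u (snd p)\<bar> / 2) \<le> (\<Prod>m<card K. real (Suc m) * 2 / 8 ^ m)"
  using assms
proof (induction "card K" arbitrary: K)
  case 0
  then have "K = {}" by simp
  then show ?case by (simp add: opairs_def)
next
  case (Suc m K)
  have fin: "finite K" and rng: "u ` K \<subseteq> {0..1}" using Suc by auto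
  have cK: "card K = Suc m" using Suc by simp
  have rnn: "0 \<le> (\<Prod>m<card K. real (Suc m) * 2 / 8 ^ m)" by (rule prod_nonneg) simp
  show ?case
  proof (cases "inj_on u K")
    case False
    then obtain i j where ij: "i \<in> K" "j \<in> K" "i \<noteq> j" "u i = u j"
      by (auto simp: inj_on_def)
    have mem: "(min i j, max i j) \<in> opairs K" using ij by (auto simp: opairs_def min_def max_def)
    have "u (min i j) = u (max i j)" using ij by (auto simp: min_def max_def)
    then have "(\<Prod>p\<in>opairs K. \<bar>u (fst p) - u (snd p)\<bar> / 2) = 0"
      using mem finite_opairs[OF fin] by (subst prod_zero_iff) force+
    then show ?thesis using rnn by simp
  next
    case True
    obtain k where k: "k \<in> K" and sm: "\<bar>\<Prod>j\<in>K-{k}. (u k - u j)\<bar> \<le> real (Suc m) * 2 / 4 ^ m"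
      using exists_small[OF fin True cK rng] by blast
    define K' where "K' = K - {k}"
    have cK': "card K' = m" using cK k fin by (simp add: K'_def)
    have IH: "(\<Prod>p\<in>opairs K'. \<bar>u (fst p) - u (snd p)\<bar> / 2) \<le> (\<Prod>m<m. real (Suc m) * 2 / 8 ^ m)"
      using Suc(1)[of K'] cK' fin rng by (auto simp: K'_def)
    define h where "h j = (min k j, max k j)" for j
    have inj: "inj_on h K'" unfolding h_def inj_on_def K'_def by (auto simp: min_def max_def split: if_splits)
    have split: "opairs K = opairs K' \<union> h ` K'"
    proof
      show "opairs K \<subseteq> opairs K' \<union> h ` K'"
      proof
        fix p assume p: "p \<in> opairs K"
        show "p \<in> opairs K' \<union> h ` K'"
        proof (cases "fst p = k \<or> snd p = k")
          case True
          then show ?thesis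
          proof
            assume "fst p = k"
            then have "p = h (snd p)" "snd p \<in> K'" using p
              by (auto simp: h_def opairs_def K'_def prod_eq_iff)
            then show ?thesis by (metis UnI2 imageI)
          next
            assume "snd p = k"
            then have "p = h (fst p)" "fst p \<in> K'" using p
              by (auto simp: h_def opairs_def K'_def prod_eq_iff)
            then show ?thesis by (metis UnI2 imageI)
          qed
        next
          case False
          then show ?thesis using p by (auto simp: opairs_def K'_def)
        qed
      qed
      show "opairs K' \<union> h ` K' \<subseteq> opairs K"
        unfolding opairs_def h_def K'_def using k by (auto simp: min_def max_def)
    qed
    have disj: "opairs K' \<inter> h ` K' = {}"
      unfolding opairs_def h_def K'_def by (auto simp: min_def max_def split: if_splits)
    have finK': "finite K'" using fin by (simp add: K'_def)
    have "(\<Prod>p\<in>opairs K. \<bar>u (fst p) - u (snd p)\<bar> / 2)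
        = (\<Prod>p\<in>opairs K'. \<bar>u (fst p) - u (snd p)\<bar> / 2) * (\<Prod>p\<in>h ` K'. \<bar>u (fst p) - u (snd p)\<bar> / 2)"
      unfolding split using disj finK' finite_opairs[OF finK'] by (simp add: prod.union_disjoint)
    also have "(\<Prod>p\<in>h ` K'. \<bar>u (fst p) - u (snd p)\<bar> / 2) = (\<Prod>j\<in>K'. \<bar>u k - u j\<bar> / 2)"
      by (subst prod.reindex[OF inj]) (auto intro!: prod.cong simp: h_def min_def max_def abs_minus_commute)
    also have "\<dots> = \<bar>\<Prod>j\<in>K'. (u k - u j)\<bar> / 2 ^ m"
      using cK' by (simp add: abs_prod prod_dividef)
    also have "\<dots> \<le> real (Suc m) * 2 / 4 ^ m / 2 ^ m"
      using divide_right_mono[OF sm, of "2 ^ m"] by (simp add: K'_def)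
    also have "real (Suc m) * 2 / 4 ^ m / 2 ^ m = real (Suc m) * 2 / 8 ^ m"
      by (simp add: power_mult_distrib[symmetric])
    finally have "(\<Prod>p\<in>opairs K. \<bar>u (fst p) - u (snd p)\<bar> / 2)
       \<le> (\<Prod>p\<in>opairs K'. \<bar>u (fst p) - u (snd p)\<bar> / 2) * (real (Suc m) * 2 / 8 ^ m)"
      by (simp add: mult_left_mono prod_nonneg)
    also have "\<dots> \<le> (\<Prod>m<m. real (Suc m) * 2 / 8 ^ m) * (real (Suc m) * 2 / 8 ^ m)"
      using IH by (intro mult_right_mono) auto
    also have "\<dots> = (\<Prod>m<card K. real (Suc m) * 2 / 8 ^ m)"
      using cK by simp
    finally show ?thesis .
  qed
qed

lemma prod_bound_eq:
  "(\<Prod>m<r. real (Suc m) * 2 / 8 ^ m) = fact r * 2 powr (real r - 3/2 * real r * (real r - 1))"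
proof (induction r)
  case 0 then show ?case by simp
next
  case (Suc r)
  have e: "real (Suc r) - 3/2 * real (Suc r) * (real (Suc r) - 1)
         = (real r - 3/2 * real r * (real r - 1)) + 1 - 3 * real r"
    by (simp add: field_simps)
  have p8: "(8::real) ^ r = 2 powr (3 * real r)"
  proof -
    have "(8::real) ^ r = 2 ^ (3 * r)" by (simp add: power_mult)
    also have "\<dots> = 2 powr (real (3 * r))" by (rule powr_realpow[symmetric]) simp
    finally show ?thesis by simp
  qed
  have "(\<Prod>m<Suc r. real (Suc m) * 2 / 8 ^ m)
      = fact r * 2 powr (real r - 3/2 * real r * (real r - 1)) * (real (Suc r) * 2 / 8 ^ r)"
    using Suc by simp
  also have "\<dots> = fact (Suc r) * (2 powr (real r - 3/2 * real r * (real r - 1)) * 2 powr 1 / 2 powr (3 * real r))"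
    by (simp add: p8 algebra_simps)
  also have "\<dots> = fact (Suc r) * 2 powr (real (Suc r) - 3/2 * real (Suc r) * (real (Suc r) - 1))"
  proof -
    have "\<And>E x::real. 2 powr (E + 1 - x) = 2 powr E * 2 powr 1 / 2 powr x"
      by (simp add: powr_add powr_diff)
    then show ?thesis unfolding e by presburger
  qed
  finally show ?case .
qed

lemma final_num:
  assumes "r \<ge> (1::nat)"
  shows "(\<Prod>m<r. real (Suc m) * 2 / 8 ^ m)
     \<le> 2 powr (- (3/2) * (real r)\<^sup>2) *
              exp (1 * real r * ln (real r) + 3 * real r + 0 * ln (real r))"
proof -
  have rpos: "real r > 0" using assms by simp
  have f: "fact r \<le> exp (real r * ln (real r))"
  proof -
    have "(fact r :: real) \<le> real (r ^ r)" by (rule fact_le_power)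
    also have "\<dots> = exp (real r * ln (real r))"
      using rpos by (simp add: exp_of_nat_mult)
    finally show ?thesis .
  qed
  have "2 powr (real r - 3/2 * real r * (real r - 1)) = 2 powr (- (3/2) * (real r)\<^sup>2) * 2 powr (5/2 * real r)"
  proof -
    have "real r - 3/2 * real r * (real r - 1) = - (3/2) * (real r)\<^sup>2 + 5/2 * real r"
      by (simp add: power2_eq_square field_simps)
    then show ?thesis by (simp only: powr_add[symmetric])
  qed
  also have "2 powr (5/2 * real r) \<le> exp (3 * real r)"
  proof -
    have "2 powr (5/2 * real r) = exp (5/2 * real r * ln 2)" by (simp add: powr_def)
    also have "\<dots> \<le> exp (3 * real r)"
    proof -
      have "5/2 * real r * ln 2 \<le> 5/2 * real r * 1"
        using ln_2_less_1 rpos by (intro mult_left_mono) auto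
      then show ?thesis by simp
    qed
    finally show ?thesis .
  qed
  finally have g: "2 powr (real r - 3/2 * real r * (real r - 1)) \<le> 2 powr (- (3/2) * (real r)\<^sup>2) * exp (3 * real r)"
    by simp
  have "(\<Prod>m<r. real (Suc m) * 2 / 8 ^ m) \<le> exp (real r * ln (real r)) * (2 powr (- (3/2) * (real r)\<^sup>2) * exp (3 * real r))"
    unfolding prod_bound_eq using f g by (intro mult_mono) auto
  also have "\<dots> = 2 powr (- (3/2) * (real r)\<^sup>2) * exp (1 * real r * ln (real r) + 3 * real r + 0 * ln (real r))"
    by (simp add: exp_add)
  finally show ?thesis .
qed



locale gctx =
  fixes g :: "real \<Rightarrow> real"
  assumes pos: "\<forall>x\<in>{0..1}. g x > 0"
    and nonincr: "\<forall>x y. 0 \<le> x \<longrightarrow> x \<le> y \<longrightarrow> y \<le> 1 \<longrightarrow> g y \<le> g x"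
    and diff: "g differentiable_on {0..1}"
    and total: "integral {0..1} g = 1"
begin

lemma g_cont: "continuous_on {0..1} g"
  using diff by (rule differentiable_imp_continuous_on)

lemma g_int: "0 \<le> a \<Longrightarrow> b \<le> 1 \<Longrightarrow> g integrable_on {a..b}"
  by (rule integrable_continuous_interval, rule continuous_on_subset[OF g_cont]) auto

lemma g_nn: "0 \<le> x \<Longrightarrow> x \<le> 1 \<Longrightarrow> 0 \<le> g x"
  using pos by (simp add: less_imp_le)

lemma int_split: "0 \<le> a \<Longrightarrow> a \<le> c \<Longrightarrow> c \<le> b \<Longrightarrow> b \<le> 1 \<Longrightarrow>
   integral {a..c} g + integral {c..b} g = integral {a..b} g"
  by (rule Henstock_Kurzweil_Integration.integral_combine) (auto intro: g_int)

lemma int_nn: "0 \<le> a \<Longrightarrow> b \<le> 1 \<Longrightarrow> 0 \<le> integral {a..b} g"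
  by (rule integral_nonneg) (auto intro: g_int g_nn)

lemma U_range: "0 \<le> x \<Longrightarrow> x \<le> 1 \<Longrightarrow> 0 \<le> integral {0..x} g \<and> integral {0..x} g \<le> 1"
  using int_split[of 0 x 1] int_nn[of 0 x] int_nn[of x 1] total by auto

lemma half:
  assumes "0 \<le> a" "a \<le> b" "b \<le> 1"
  shows "integral {(a+b)/2..b} g \<le> (integral {0..b} g - integral {0..a} g) / 2"
proof -
  define m where "m = (a+b)/2"
  have am: "a \<le> m" "m \<le> b" using assms by (auto simp: m_def)
  have "integral {m..b} g \<le> integral {m..b} (\<lambda>_. g m)"
    by (rule integral_le) (use assms am nonincr in \<open>auto intro: g_int\<close>)
  also have "\<dots> = (b - m) * g m" using am by simp
  also have "\<dots> = (m - a) * g m" by (simp add: m_def field_simps)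
  also have "\<dots> = integral {a..m} (\<lambda>_. g m)" using am by simp
  also have "\<dots> \<le> integral {a..m} g"
    by (rule integral_le) (use assms am nonincr in \<open>auto intro: g_int\<close>)
  finally have le: "integral {m..b} g \<le> integral {a..m} g" .
  have "integral {0..b} g - integral {0..a} g = integral {a..m} g + integral {m..b} g"
    using int_split[of 0 a b] int_split[of a m b] assms am by simp
  then show ?thesis using le by (simp add: m_def)
qed

definition dens :: "real \<Rightarrow> real" where "dens x = indicator {0..1} x * g x"

lemma dens_nn: "0 \<le> dens x"
  by (simp add: dens_def indicator_def g_nn)

lemma dens_meas_borel: "(\<lambda>x. ennreal (dens x)) \<in> borel_measurable borel"
proof -
  have "(\<lambda>x. indicator {0..1} x *\<^sub>R g x) \<in> borel_measurable borel"
    by (rule borel_measurable_continuous_on_indicator) (auto intro: g_cont)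
  moreover have "dens = (\<lambda>x. indicator {0..1} x * g x)" by (rule ext) (simp add: dens_def)
  ultimately have d: "dens \<in> borel_measurable borel" by simp
  show ?thesis by (rule measurable_compose[OF d measurable_ennreal])
qed

lemma dens_meas: "(\<lambda>x. ennreal (dens x)) \<in> borel_measurable lborel"
  using dens_meas_borel by simp

lemma dist_meas_eq: "dist_meas g = density lborel (\<lambda>x. ennreal (dens x))"
  by (simp add: dist_meas_def dens_def)

lemma emeasure_interval:
  assumes "0 \<le> a" "a \<le> b" "b \<le> 1"
  shows "emeasure (dist_meas g) {a..b} = ennreal (integral {a..b} g)"
proof -
  have "emeasure (dist_meas g) {a..b} = (\<integral>\<^sup>+ x. ennreal (dens x) * indicator {a..b} x \<partial>lborel)"
    unfolding dist_meas_eq by (rule emeasure_density) (simp_all add: dens_meas dens_meas_borel)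
  also have "\<dots> = (\<integral>\<^sup>+ x. ennreal (indicator {a..b} x * g x) \<partial>lborel)"
    by (rule nn_integral_cong) (use assms in \<open>auto simp: dens_def indicator_def\<close>)
  also have "\<dots> = ennreal (integral {a..b} g)"
  proof (rule nn_integral_has_integral_lebesgue)
    show "(g has_integral integral {a..b} g) {a..b}"
      using assms by (intro integrable_integral g_int) auto
  qed (use assms in \<open>auto intro: g_nn\<close>)
  finally show ?thesis .
qed

lemma prob: "prob_space (dist_meas g)"
proof
  have "space (dist_meas g) = UNIV" by (simp add: dist_meas_def)
  moreover have "emeasure (dist_meas g) UNIV = 1"
  proof -
    have "emeasure (dist_meas g) UNIV = (\<integral>\<^sup>+ x. ennreal (dens x) * indicator UNIV x \<partial>lborel)"
      unfolding dist_meas_eq by (rule emeasure_density) (simp_all add: dens_meas dens_meas_borel)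
    also have "\<dots> = (\<integral>\<^sup>+ x. ennreal (indicator {0..1} x * g x) \<partial>lborel)"
      by (simp add: dens_def)
    also have "\<dots> = ennreal (integral {0..1} g)"
    proof (rule nn_integral_has_integral_lebesgue)
      show "(g has_integral integral {0..1} g) {0..1}"
        by (intro integrable_integral g_int) auto
    qed (auto intro: g_nn)
    finally show ?thesis using total by simp
  qed
  ultimately show "emeasure (dist_meas g) (space (dist_meas g)) = 1" by simp
qed

lemma AE_01: "AE x in dist_meas g. 0 \<le> x \<and> x \<le> 1"
  unfolding dist_meas_eq
  by (subst AE_density[OF dens_meas]) (auto simp: dens_def indicator_def)

end



lemma event_pair:
  assumes ev: "event_D (sym_entry \<omega>) I" and c3: "card I \<ge> 3"
    and ij: "i \<in> I" "j \<in> I" "i < j"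
  shows "(\<omega> (i,i) + \<omega> (j,j)) / 2 \<le> \<omega> (i,j) \<and> \<omega> (i,j) \<le> max (\<omega> (i,i)) (\<omega> (j,j))"
proof -
  let ?f = "sym_entry \<omega>"
  have fij: "?f i j = \<omega> (i,j)" "?f j i = \<omega> (i,j)" "?f i i = \<omega> (i,i)" "?f j j = \<omega> (j,j)"
    using ij by (auto simp: sym_entry_def min_def max_def)
  have A: "(\<omega> (i,i) + \<omega> (j,j)) / 2 \<le> \<omega> (i,j)"
    using ev ij fij unfolding event_D_def by (metis less_irrefl)
  have B: "\<omega> (i,j) \<le> max (\<omega> (i,i)) (\<omega> (j,j))"
  proof (rule ccontr)
    assume "\<not> ?thesis"
    then have gi: "\<omega> (i,j) > \<omega> (i,i)" and gj: "\<omega> (i,j) > \<omega> (j,j)" by auto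
    define a where "a = \<omega> (i,i)"
    define b where "b = \<omega> (j,j)"
    define c where "c = \<omega> (i,j)"
    define d where "d = 2 * c - a - b"
    have dpos: "d > 0" using gi gj by (simp add: d_def a_def b_def c_def)
    define p where "p = (\<lambda>k. if k = i then (c - b) / d else (c - a) / d)"
    have fin: "finite I" using c3 by (metis card.infinite not_numeral_le_zero)
    have sub: "{i, j} \<subset> I"
    proof -
      have "{i,j} \<subseteq> I" using ij by auto
      moreover have "card {i,j} = 2" using ij by simp
      ultimately show ?thesis using c3 by auto
    qed
    have ne: "i \<noteq> j" using ij by simp
    have "supports_local_eq ?f {i, j}"
      unfolding supports_local_eq_def
    proof (intro exI conjI)
      show "\<forall>k\<in>{i,j}. 0 < p k" using ne gi gj dpos
        by (auto simp: p_def a_def b_def c_def)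
      have pi: "p i = (c - b) / d" and pj: "p j = (c - a) / d" using ne by (auto simp: p_def)
      have "(\<Sum>k\<in>{i,j}. p k) = ((c - b) + (c - a)) / d"
        using ne by (simp add: pi pj add_divide_distrib[symmetric])
      also have "\<dots> = 1" using dpos by (simp add: d_def)
      finally show "(\<Sum>k\<in>{i,j}. p k) = 1" .
      have num: "c*(c-b) + b*(c-a) = a*(c-b) + c*(c-a)" by algebra
      have rowj: "c * p i + b * p j = a * p i + c * p j"
      proof -
        have e1: "c * p i + b * p j = (c*(c-b) + b*(c-a)) / d"
          unfolding pi pj by (simp only: add_divide_distrib times_divide_eq_right)
        have e2: "a * p i + c * p j = (a*(c-b) + c*(c-a)) / d"
          unfolding pi pj by (simp only: add_divide_distrib times_divide_eq_right)
        show ?thesis unfolding e1 e2 num ..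
      qed
      show "\<forall>k\<in>{i,j}. (\<Sum>l\<in>{i,j}. ?f k l * p l) = a * p i + c * p j"
        using ne fij rowj by (auto simp: a_def b_def c_def)
      show "\<forall>x. (\<Sum>k\<in>{i,j}. x k) = 0 \<longrightarrow> (\<Sum>k\<in>{i,j}. \<Sum>l\<in>{i,j}. ?f k l * x k * x l) \<le> 0"
      proof (intro allI impI)
        fix x :: "nat \<Rightarrow> real" assume "(\<Sum>k\<in>{i,j}. x k) = 0"
        then have xj: "x j = - x i" using ne by simp
        have "(\<Sum>k\<in>{i,j}. \<Sum>l\<in>{i,j}. ?f k l * x k * x l) = - d * (x i)\<^sup>2"
          using ne fij xj by (simp add: d_def a_def b_def c_def power2_eq_square algebra_simps)
        also have "\<dots> \<le> 0" using dpos by simp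
        finally show "(\<Sum>k\<in>{i,j}. \<Sum>l\<in>{i,j}. ?f k l * x k * x l) \<le> 0" .
      qed
    qed
    moreover have "card {i, j} \<ge> 2" using ne by simp
    ultimately show False using ev sub unfolding event_D_def by blast
  qed
  show ?thesis using A B by simp
qed


context gctx begin

lemma pair_int:
  assumes "0 \<le> a" "a \<le> 1" "0 \<le> b" "b \<le> 1"
  shows "(a + b) / 2 \<le> max a b \<and> 0 \<le> integral {(a+b)/2..max a b} g \<and>
         integral {(a+b)/2..max a b} g \<le> \<bar>integral {0..a} g - integral {0..b} g\<bar> / 2"
proof (cases "a \<le> b")
  case True
  have "integral {(a+b)/2..b} g \<le> (integral {0..b} g - integral {0..a} g) / 2"
    using assms True by (intro half) auto
  moreover have "0 \<le> integral {(a+b)/2..b} g" using assms True by (intro int_nn) auto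
  ultimately show ?thesis using True by (auto simp: max_def)
next
  case False
  have "integral {(b+a)/2..a} g \<le> (integral {0..a} g - integral {0..b} g) / 2"
    using assms False by (intro half) auto
  moreover have "0 \<le> integral {(b+a)/2..a} g" using assms False by (intro int_nn) auto
  ultimately show ?thesis using False by (auto simp: max_def add.commute)
qed

lemma main_bound:
  assumes Isub: "I \<subseteq> {1..n}" and c3: "card I \<ge> 3"
  shows "measure (PiM (pairs n) (\<lambda>_. dist_meas g))
           {\<omega> \<in> space (PiM (pairs n) (\<lambda>_. dist_meas g)). event_D (sym_entry \<omega>) I}
         \<le> (\<Prod>m<card I. real (Suc m) * 2 / 8 ^ m)"
proof -
  define M where "M = (\<lambda>_::nat\<times>nat. dist_meas g)"
  define Q where "Q = opairs I"
  define A where "A = pairs n - Q"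
  define B where "B = (\<Prod>m<card I. real (Suc m) * 2 / 8 ^ m)"
  have B0: "0 \<le> B" unfolding B_def by (rule prod_nonneg) simp
  have finI: "finite I" using Isub finite_subset by blast
  have finP: "finite (pairs n)"
    by (rule finite_subset[of _ "{1..n}\<times>{1..n}"]) (auto simp: pairs_def)
  have OP: "Q \<subseteq> pairs n" using Isub by (auto simp: Q_def opairs_def pairs_def)
  have PAO: "pairs n = A \<union> Q" using OP by (auto simp: A_def)
  have disj: "A \<inter> Q = {}" by (auto simp: A_def)
  have finA: "finite A" using finP by (simp add: A_def)
  have finO: "finite Q" using finP OP finite_subset by blast
  have diagA: "(i,i) \<in> A" if "i \<in> I" for i
    using Isub that by (auto simp: A_def Q_def opairs_def pairs_def)
  have diagO: "(fst p, fst p) \<in> A" "(snd p, snd p) \<in> A" if "p \<in> Q" for p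
    using that diagA by (auto simp: Q_def opairs_def)
  have probM: "prob_space (M i)" for i by (simp add: M_def prob)
  interpret PS: product_prob_space M "pairs n"
    by (auto simp: product_prob_space_def product_prob_space_axioms_def product_sigma_finite_def
        probM intro: prob_space_imp_sigma_finite)
  define lo where "lo \<omega> p = (\<omega> (fst p, fst p) + \<omega> (snd p, snd p)) / 2" for \<omega> :: "nat\<times>nat \<Rightarrow> real" and p :: "nat \<times> nat"
  define hi where "hi \<omega> p = max (\<omega> (fst p, fst p)) (\<omega> (snd p, snd p))" for \<omega> :: "nat\<times>nat \<Rightarrow> real" and p :: "nat \<times> nat"
  define \<Phi> where "\<Phi> \<omega> = (\<Prod>p\<in>Q. indicator {lo \<omega> p..hi \<omega> p} (\<omega> p) :: ennreal)" for \<omega>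
  define S where "S = {\<omega> \<in> space (PiM (pairs n) M). event_D (sym_entry \<omega>) I}"
  have comp: "(\<lambda>\<omega>. \<omega> q) \<in> borel_measurable (PiM T M)" if q: "q \<in> T" for q T
  proof -
    have "(\<lambda>\<omega>. \<omega> q) \<in> measurable (PiM T M) (M q)" using q by (rule measurable_component_singleton)
    moreover have "sets (M q) = sets borel" by (simp add: M_def dist_meas_def)
    ultimately show ?thesis using measurable_cong_sets[OF refl, of "M q" borel "PiM T M"] by simp
  qed
  have \<Phi>m: "\<Phi> \<in> borel_measurable (PiM (A \<union> Q) M)"
    unfolding \<Phi>_def
  proof (rule borel_measurable_prod_ennreal)
    fix p assume p: "p \<in> Q"
    have eq: "(\<lambda>\<omega>. indicator {lo \<omega> p..hi \<omega> p} (\<omega> p) :: ennreal)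
        = (\<lambda>\<omega>. if lo \<omega> p \<le> \<omega> p \<and> \<omega> p \<le> hi \<omega> p then 1 else 0)"
      by (auto simp: indicator_def)
    have in1: "(fst p, fst p) \<in> A \<union> Q" "(snd p, snd p) \<in> A \<union> Q" "p \<in> A \<union> Q"
      using p diagO by auto
    note m1[measurable] = comp[OF in1(1)]
    note m2[measurable] = comp[OF in1(2)]
    note m3[measurable] = comp[OF in1(3)]
    show "(\<lambda>\<omega>. indicator {lo \<omega> p..hi \<omega> p} (\<omega> p) :: ennreal) \<in> borel_measurable (PiM (A \<union> Q) M)"
    proof -
      have f1: "(\<lambda>x. (x (fst p, fst p) + x (snd p, snd p)) / 2) \<in> borel_measurable (PiM (A \<union> Q) M)"
        by (intro borel_measurable_divide borel_measurable_add m1 m2 borel_measurable_const)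
      have f2: "(\<lambda>x. max (x (fst p, fst p)) (x (snd p, snd p))) \<in> borel_measurable (PiM (A \<union> Q) M)"
        by (intro borel_measurable_max m1 m2)
      have pr1: "Measurable.pred (PiM (A \<union> Q) M) (\<lambda>x. (x (fst p, fst p) + x (snd p, snd p)) / 2 \<le> x p)"
        unfolding pred_def by (rule borel_measurable_le[OF f1 m3])
      have pr2: "Measurable.pred (PiM (A \<union> Q) M) (\<lambda>x. x p \<le> max (x (fst p, fst p)) (x (snd p, snd p)))"
        unfolding pred_def by (rule borel_measurable_le[OF m3 f2])
      have pr: "Measurable.pred (PiM (A \<union> Q) M) (\<lambda>x. (x (fst p, fst p) + x (snd p, snd p)) / 2 \<le> x p
           \<and> x p \<le> max (x (fst p, fst p)) (x (snd p, snd p)))"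
        using pr1 pr2 by (rule pred_intros_logic)
      show ?thesis unfolding eq unfolding lo_def hi_def
        by (rule measurable_If[OF _ _ pr[unfolded pred_def]]) simp_all
    qed
  qed
  have Sle: "emeasure (PiM (pairs n) M) S \<le> ennreal B"
  proof (cases "S \<in> sets (PiM (pairs n) M)")
    case False
    then show ?thesis by (simp add: emeasure_notin_sets)
  next
    case True
    have ind_le: "indicator S \<omega> \<le> \<Phi> \<omega>" for \<omega>
    proof (cases "\<omega> \<in> S")
      case True
      then have ev: "event_D (sym_entry \<omega>) I" by (simp add: S_def)
      have "\<Phi> \<omega> = 1" unfolding \<Phi>_def
      proof (rule prod.neutral, intro ballI)
        fix p assume "p \<in> Q"
        then have "fst p \<in> I" "snd p \<in> I" "fst p < snd p" by (auto simp: Q_def opairs_def)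
        from event_pair[OF ev c3 this] have "lo \<omega> p \<le> \<omega> p \<and> \<omega> p \<le> hi \<omega> p"
          by (simp add: lo_def hi_def)
        then show "indicator {lo \<omega> p..hi \<omega> p} (\<omega> p) = (1::ennreal)" by simp
      qed
      then show ?thesis using True by simp
    next
      case False
      then show ?thesis by simp
    qed
    have "emeasure (PiM (pairs n) M) S = (\<integral>\<^sup>+ \<omega>. indicator S \<omega> \<partial>PiM (pairs n) M)"
      using True by simp
    also have "\<dots> \<le> (\<integral>\<^sup>+ \<omega>. \<Phi> \<omega> \<partial>PiM (pairs n) M)"
      by (rule nn_integral_mono) (rule ind_le)
    also have "\<dots> = (\<integral>\<^sup>+ x. (\<integral>\<^sup>+ y. \<Phi> (merge A Q (x, y)) \<partial>PiM Q M) \<partial>PiM A M)"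
      unfolding PAO by (rule PS.product_nn_integral_fold[OF disj finA finO \<Phi>m])
    also have "\<dots> \<le> (\<integral>\<^sup>+ x. ennreal B \<partial>PiM A M)"
    proof (rule nn_integral_mono_AE)
      have "AE x in PiM A M. \<forall>i\<in>I. 0 \<le> x (i,i) \<and> x (i,i) \<le> 1"
      proof (rule AE_finite_allI[OF finI])
        fix i assume "i \<in> I"
        show "AE x in PiM A M. 0 \<le> x (i,i) \<and> x (i,i) \<le> 1"
          by (rule AE_PiM_component[OF probM diagA[OF \<open>i \<in> I\<close>]]) (unfold M_def, rule AE_01)
      qed
      then show "AE x in PiM A M. (\<integral>\<^sup>+ y. \<Phi> (merge A Q (x, y)) \<partial>PiM Q M) \<le> ennreal B"
      proof (rule AE_mp, intro AE_I2 impI)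
        fix x :: "nat \<times> nat \<Rightarrow> real" assume x01: "\<forall>i\<in>I. 0 \<le> x (i,i) \<and> x (i,i) \<le> 1"
        define u where "u i = integral {0..x (i,i)} g" for i
        have pin: "lo x p \<le> hi x p \<and> 0 \<le> integral {lo x p..hi x p} g \<and>
             integral {lo x p..hi x p} g \<le> \<bar>u (fst p) - u (snd p)\<bar> / 2" if p: "p \<in> Q" for p
        proof -
          have "fst p \<in> I" "snd p \<in> I" using p by (auto simp: Q_def opairs_def)
          then show ?thesis using pair_int[of "x (fst p, fst p)" "x (snd p, snd p)"] x01
            by (simp add: lo_def hi_def u_def)
        qed
        have lo01: "0 \<le> lo x p" "hi x p \<le> 1" if p: "p \<in> Q" for p
        proof -
          have "fst p \<in> I" "snd p \<in> I" using p by (auto simp: Q_def opairs_def)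
          then show "0 \<le> lo x p" "hi x p \<le> 1" using x01 by (auto simp: lo_def hi_def)
        qed
        have "(\<integral>\<^sup>+ y. \<Phi> (merge A Q (x, y)) \<partial>PiM Q M)
            = (\<integral>\<^sup>+ y. (\<Prod>p\<in>Q. indicator {lo x p..hi x p} (y p)) \<partial>PiM Q M)"
        proof (rule nn_integral_cong)
          fix y
          have "lo (merge A Q (x, y)) p = lo x p" "hi (merge A Q (x, y)) p = hi x p"
               "merge A Q (x, y) p = y p" if "p \<in> Q" for p
            using that diagO[OF that] disj by (auto simp: lo_def hi_def)
          then show "\<Phi> (merge A Q (x, y)) = (\<Prod>p\<in>Q. indicator {lo x p..hi x p} (y p))"
            unfolding \<Phi>_def by (intro prod.cong) auto
        qed
        also have "\<dots> = (\<Prod>p\<in>Q. \<integral>\<^sup>+ z. indicator {lo x p..hi x p} z \<partial>M p)"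
          by (rule PS.product_nn_integral_prod[OF finO]) (simp add: M_def dist_meas_def)
        also have "\<dots> = (\<Prod>p\<in>Q. ennreal (integral {lo x p..hi x p} g))"
        proof (rule prod.cong[OF refl])
          fix p assume p: "p \<in> Q"
          have "(\<integral>\<^sup>+ z. indicator {lo x p..hi x p} z \<partial>M p) = emeasure (M p) {lo x p..hi x p}"
            by (simp add: M_def dist_meas_def)
          also have "\<dots> = ennreal (integral {lo x p..hi x p} g)"
            unfolding M_def using pin[OF p] lo01[OF p] by (intro emeasure_interval) auto
          finally show "(\<integral>\<^sup>+ z. indicator {lo x p..hi x p} z \<partial>M p) = ennreal (integral {lo x p..hi x p} g)" .
        qed
        also have "\<dots> = ennreal (\<Prod>p\<in>Q. integral {lo x p..hi x p} g)"
          using pin by (intro prod_ennreal) auto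
        also have "\<dots> \<le> ennreal (\<Prod>p\<in>Q. \<bar>u (fst p) - u (snd p)\<bar> / 2)"
          using pin by (intro ennreal_leI prod_mono) auto
        also have "\<dots> \<le> ennreal B"
        proof (rule ennreal_leI)
          have "u ` I \<subseteq> {0..1}" using x01 U_range by (auto simp: u_def)
          then show "(\<Prod>p\<in>Q. \<bar>u (fst p) - u (snd p)\<bar> / 2) \<le> B"
            unfolding Q_def B_def by (rule vdm[OF finI])
        qed
        finally show "(\<integral>\<^sup>+ y. \<Phi> (merge A Q (x, y)) \<partial>PiM Q M) \<le> ennreal B" .
      qed
    qed
    also have "\<dots> = ennreal B"
    proof -
      interpret PA: prob_space "PiM A M" by (rule prob_space_PiM) (rule probM)
      show ?thesis by (simp add: PA.emeasure_space_1)
    qed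
    finally show ?thesis .
  qed
  have "measure (PiM (pairs n) M) S \<le> B"
    unfolding measure_def using Sle B0 by (intro enn2real_leI) auto
  then show ?thesis by (simp add: M_def S_def B_def)
qed

end


theorem lemma2p10:
  fixes g :: "real \<Rightarrow> real"
  assumes pos: "\<forall>x\<in>{0..1}. g x > 0"
    and nonincr: "\<forall>x y. 0 \<le> x \<longrightarrow> x \<le> y \<longrightarrow> y \<le> 1 \<longrightarrow> g y \<le> g x"
    and diff: "g differentiable_on {0..1}"
    and total: "integral {0..1} g = 1"
    and hazard: "\<forall>x y. 0 \<le> x \<longrightarrow> x \<le> y \<longrightarrow> y < 1 \<longrightarrow>
                   g x / (1 - cdf g x) \<le> g y / (1 - cdf g y)"
  shows "\<exists>\<eta>1 \<eta>2 C :: real. \<exists>N :: nat. \<forall>(n :: nat) (I :: nat set).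
           I \<subseteq> {1..n} \<longrightarrow> card I \<ge> N \<longrightarrow>
           measure (PiM (pairs n) (\<lambda>_. dist_meas g))
             {\<omega> \<in> space (PiM (pairs n) (\<lambda>_. dist_meas g)). event_D (sym_entry \<omega>) I}
           \<le> 2 powr (- (3/2) * (real (card I))\<^sup>2) *
              exp (\<eta>1 * real (card I) * ln (real (card I)) + \<eta>2 * real (card I)
                   + C * ln (real (card I)))"
  proof -
  interpret gctx g using pos nonincr diff total by unfold_locales
  show ?thesis
  proof (rule exI[of _ 1], rule exI[of _ 3], rule exI[of _ 0], rule exI[of _ 3], intro allI impI)
    fix n :: nat and I :: "nat set"
    assume Isub: "I \<subseteq> {1..n}" and c3: "3 \<le> card I"
    have "measure (PiM (pairs n) (\<lambda>_. dist_meas g))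
             {\<omega> \<in> space (PiM (pairs n) (\<lambda>_. dist_meas g)). event_D (sym_entry \<omega>) I}
          \<le> (\<Prod>m<card I. real (Suc m) * 2 / 8 ^ m)"
      by (rule main_bound[OF Isub c3])
    also have "\<dots> \<le> 2 powr (- (3/2) * (real (card I))\<^sup>2) *
              exp (1 * real (card I) * ln (real (card I)) + 3 * real (card I)
                   + 0 * ln (real (card I)))"
      by (rule final_num) (use c3 in simp)
    finally show "measure (PiM (pairs n) (\<lambda>_. dist_meas g))
             {\<omega> \<in> space (PiM (pairs n) (\<lambda>_. dist_meas g)). event_D (sym_entry \<omega>) I}
           \<le> 2 powr (- (3/2) * (real (card I))\<^sup>2) *
              exp (1 * real (card I) * ln (real (card I)) + 3 * real (card I)
                   + 0 * ln (real (card I)))" .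
  qed
qed

end
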